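(* Let $X$ be a locally connected compact metrizable group, let $T$ be a minimal rotation of $X$, let $G$ be a locally compact second countable group, $f\colon X\to G$ continuous, $H$ a closed subgroup of $G$, and let $y\mapsto H_y$ be a consistent selection of subgroups in the essential ranges of $f$. Let $U\subseteq G$ be open and $C\subseteq G$ compact. Then for every fixed integer $n$ the sets $\{y\in X: f(n,y)H_y\cap UH_y\neq\varnothing\}$ and $\{y\in X: f(n,y)H_y\cap CH_y=\varnothing\}$ are open in $X$.
   Context: The cocycle is $f(n,x)=f(T^{n-1}x)\cdots f(x)$ for $n\ge1$, $f(0,x)=\mathbf 1_G$, $f(n,x)=f(-n,T^nx)^{-1}$ for $n<0$. $E_x(f)$ is the set of $g\in G$ such that for every open neighbourhood $V$ of $g$ and every open neighbourhood $\mathcal O$ of $x$ there is $m\neq0$ with $T^{-m}\mathcal O\cap\mathcal O\cap\{y:f(m,y)\in V\}\neq\varnothing$. $H^G=\{gHg^{-1}:g\in G\}$, topologised via the bijection with $G/N(H)$, $N(H)=\{g:gHg^{-1}=H\}$. A consistent selection of subgroups in the essential ranges of $f$ is a continuous map $y\mapsto H_y$ from $X$ into $H^G$ such that $H_x\subseteq E_x(f)$ and $H_{T^mx}=f(m,x)H_xf(m,x)^{-1}$ for all $x\in X$, $m\in\mathbb Z$. *)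

theory Defs
  imports "HOL-Analysis.Analysis"
begin

(* Groups are written additively (Isabelle's group_add is NOT assumed commutative). *)

definition is_subgroup :: "'g::group_add set \<Rightarrow> bool" where
  "is_subgroup H \<longleftrightarrow> 0 \<in> H \<and> (\<forall>a\<in>H. \<forall>b\<in>H. a + b \<in> H) \<and> (\<forall>a\<in>H. - a \<in> H)"

definition conj_set :: "'g::group_add \<Rightarrow> 'g set \<Rightarrow> 'g set" where
  "conj_set g H = (\<lambda>h. g + h + - g) ` H"

definition conjugates :: "'g::group_add set \<Rightarrow> 'g set set" where
  "conjugates H = {conj_set g H | g. True}"

(* open sets of H^G, topologised via the bijection with G/N(H): a set S of conjugates is open
   iff its preimage under g \<mapsto> gHg^{-1} is open in G (quotient topology) *)
definition conj_open :: "'g::{group_add,topological_space} set \<Rightarrow> 'g set set \<Rightarrow> bool" where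
  "conj_open H S \<longleftrightarrow> S \<subseteq> conjugates H \<and> open {g. conj_set g H \<in> S}"

definition is_rotation :: "('x::group_add \<Rightarrow> 'x) \<Rightarrow> bool" where
  "is_rotation T \<longleftrightarrow> (\<exists>a. \<forall>x. T x = a + x)"

definition Tpow :: "('x \<Rightarrow> 'x) \<Rightarrow> int \<Rightarrow> 'x \<Rightarrow> 'x" where
  "Tpow T n = (if 0 \<le> n then T ^^ nat n else inv T ^^ nat (- n))"

definition minimal_map :: "('x::topological_space \<Rightarrow> 'x) \<Rightarrow> bool" where
  "minimal_map T \<longleftrightarrow> (\<forall>x. closure {Tpow T n x | n. True} = UNIV)"

fun cocycle_nat :: "('x \<Rightarrow> 'g::group_add) \<Rightarrow> ('x \<Rightarrow> 'x) \<Rightarrow> nat \<Rightarrow> 'x \<Rightarrow> 'g" where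
  "cocycle_nat f T 0 x = 0"
| "cocycle_nat f T (Suc n) x = f ((T ^^ n) x) + cocycle_nat f T n x"

definition cocycle :: "('x \<Rightarrow> 'g::group_add) \<Rightarrow> ('x \<Rightarrow> 'x) \<Rightarrow> int \<Rightarrow> 'x \<Rightarrow> 'g" where
  "cocycle f T n x = (if 0 \<le> n then cocycle_nat f T (nat n) x
                      else - cocycle_nat f T (nat (- n)) (Tpow T n x))"

definition ess_range ::
  "('x::topological_space \<Rightarrow> 'g::{group_add,topological_space}) \<Rightarrow> ('x \<Rightarrow> 'x) \<Rightarrow> 'x \<Rightarrow> 'g set" where
  "ess_range f T x = {g. \<forall>V W. open V \<longrightarrow> g \<in> V \<longrightarrow> open W \<longrightarrow> x \<in> W \<longrightarrow>
      (\<exists>m::int. m \<noteq> 0 \<and> (\<exists>y. Tpow T m y \<in> W \<and> y \<in> W \<and> cocycle f T m y \<in> V))}"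

definition consistent_selection ::
  "('x::topological_space \<Rightarrow> 'g::{group_add,topological_space}) \<Rightarrow> ('x \<Rightarrow> 'x) \<Rightarrow> 'g set
     \<Rightarrow> ('x \<Rightarrow> 'g set) \<Rightarrow> bool" where
  "consistent_selection f T H Hs \<longleftrightarrow>
     (\<forall>y. Hs y \<in> conjugates H) \<and>
     (\<forall>S. conj_open H S \<longrightarrow> open {y. Hs y \<in> S}) \<and>
     (\<forall>x. Hs x \<subseteq> ess_range f T x) \<and>
     (\<forall>x m. Hs (Tpow T m x) = conj_set (cocycle f T m x) (Hs x))"

end

theory Submission
  imports Defs
begin

lemma conj_comp: "conj_set (a+b) H = conj_set a (conj_set (b::'g::group_add) H)"
  unfolding conj_set_def image_image by (simp only: diff_conv_add_uminus add.assoc minus_add)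

lemma conj_zero: "conj_set (0::'g::group_add) H = H"
  unfolding conj_set_def by simp

lemma mem_conj: "(z \<in> conj_set g H) \<longleftrightarrow> (- g + z + g \<in> (H::'g::group_add set))"
proof
  assume "z \<in> conj_set g H"
  then obtain h where "h \<in> H" "z = g + h + - g" unfolding conj_set_def by auto
  then show "- g + z + g \<in> H" by (simp add: add.assoc)
next
  assume a: "- g + z + g \<in> H"
  have "z = g + (- g + z + g) + - g" by (simp add: add.assoc)
  with a show "z \<in> conj_set g H" unfolding conj_set_def by blast
qed

lemma sat_open:
  fixes Ob :: "'g::topological_group_add set"
  assumes "open Ob"
  shows "conj_open H {conj_set g H | g. g \<in> Ob}"
  unfolding conj_open_def
proof
  show "{conj_set g H |g. g \<in> Ob} \<subseteq> conjugates H" unfolding conjugates_def by auto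
  show "open {g. conj_set g H \<in> {conj_set g H |g. g \<in> Ob}}"
  proof (subst open_subopen, intro ballI)
    fix g assume "g \<in> {g. conj_set g H \<in> {conj_set g H |g. g \<in> Ob}}"
    then obtain g' where g': "g' \<in> Ob" "conj_set g H = conj_set g' H" by auto
    define n where "n = - g + g'"
    have "conj_set n H = conj_set (- g) (conj_set g' H)" unfolding n_def by (rule conj_comp)
    also have "\<dots> = conj_set (- g) (conj_set g H)" using g'(2) by simp
    also have "\<dots> = conj_set (- g + g) H" by (rule conj_comp[symmetric])
    finally have cn: "conj_set n H = H" by (simp add: conj_zero)
    let ?T = "(\<lambda>x. x + n) -` Ob"
    have "open ?T"
      using continuous_on_open_vimage[of UNIV "\<lambda>x. x + n"] assms
      by (simp add: continuous_on_add continuous_on_id continuous_on_const)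
    moreover have "g \<in> ?T" using g' by (simp add: n_def add.assoc[symmetric])
    moreover have "?T \<subseteq> {g. conj_set g H \<in> {conj_set g H |g. g \<in> Ob}}"
    proof
      fix x assume "x \<in> ?T"
      then have "x + n \<in> Ob" by simp
      moreover have "conj_set (x + n) H = conj_set x H" by (simp add: conj_comp cn)
      ultimately have "\<exists>g'. conj_set x H = conj_set g' H \<and> g' \<in> Ob" by metis
      then show "x \<in> {g. conj_set g H \<in> {conj_set g H |g. g \<in> Ob}}" by simp
    qed
    ultimately show "\<exists>T. open T \<and> g \<in> T \<and> T \<subseteq> {g. conj_set g H \<in> {conj_set g H |g. g \<in> Ob}}"
      by blast
  qed
qed

lemma main_open:
  fixes c :: "'x::topological_space \<Rightarrow> 'g::topological_group_add" and H :: "'g set"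
  assumes c: "continuous_on UNIV c"
    and hc: "\<forall>y. Hs y \<in> conjugates H"
    and hs: "\<forall>S. conj_open H S \<longrightarrow> open {y. Hs y \<in> S}"
    and P: "open P"
    and PQ: "\<And>a g. (a, g) \<in> P \<longleftrightarrow> Q a (conj_set g H)"
  shows "open {y. Q (c y) (Hs y)}"
proof (subst open_subopen, intro ballI)
  fix y0 assume "y0 \<in> {y. Q (c y) (Hs y)}"
  then have q: "Q (c y0) (Hs y0)" by simp
  from hc obtain g0 where g0: "Hs y0 = conj_set g0 H" unfolding conjugates_def by auto
  have "(c y0, g0) \<in> P" using PQ q g0 by simp
  from open_prod_elim[OF P this] obtain A B where AB: "open A" "open B" "(c y0, g0) \<in> A \<times> B" "A \<times> B \<subseteq> P" .
  let ?S = "{conj_set g H | g. g \<in> B}"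
  have o1: "open {y. Hs y \<in> ?S}" using spec[OF hs, of ?S] sat_open[OF AB(2)] by (rule mp)
  have o2: "open (c -` A)" using continuous_on_open_vimage[of UNIV c] c AB(1) by simp
  let ?T = "c -` A \<inter> {y. Hs y \<in> ?S}"
  have "open ?T" using o1 o2 by blast
  moreover have "y0 \<in> ?T" using AB(3) g0 by auto
  moreover have "?T \<subseteq> {y. Q (c y) (Hs y)}"
  proof
    fix y assume "y \<in> ?T"
    then obtain g where "c y \<in> A" "g \<in> B" "Hs y = conj_set g H" by auto
    then show "y \<in> {y. Q (c y) (Hs y)}" using AB(4) PQ by auto
  qed
  ultimately show "\<exists>T. open T \<and> y0 \<in> T \<and> T \<subseteq> {y. Q (c y) (Hs y)}" by blast
qed


lemma conj_subgroup:
  assumes "is_subgroup (H::'g::group_add set)"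
  shows "is_subgroup (conj_set g H)"
  unfolding is_subgroup_def
proof (intro conjI ballI)
  show "0 \<in> conj_set g H" unfolding mem_conj using assms unfolding is_subgroup_def by simp
next
  fix a b assume "a \<in> conj_set g H" and "b \<in> conj_set g H"
  then have a: "- g + a + g \<in> H" and b: "- g + b + g \<in> H" unfolding mem_conj by auto
  have "- g + (a + b) + g = (- g + a + g) + (- g + b + g)" by (simp add: add.assoc)
  then show "a + b \<in> conj_set g H" unfolding mem_conj using a b assms unfolding is_subgroup_def by metis
next
  fix a assume "a \<in> conj_set g H"
  then have a: "- g + a + g \<in> H" unfolding mem_conj by auto
  have "- g + - a + g = - (- g + a + g)" by (simp add: add.assoc minus_add)
  then show "- a \<in> conj_set g H" unfolding mem_conj using a assms unfolding is_subgroup_def by metis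
qed

lemma Q1_iff:
  assumes "is_subgroup (K::'g::group_add set)"
  shows "((\<lambda>h. c + h) ` K \<inter> {u + h | u h. u \<in> U \<and> h \<in> K} \<noteq> {}) \<longleftrightarrow> (\<exists>k\<in>K. c - k \<in> U)"
proof
  assume "(\<lambda>h. c + h) ` K \<inter> {u + h | u h. u \<in> U \<and> h \<in> K} \<noteq> {}"
  then obtain k1 u k2 where k: "k1 \<in> K" "u \<in> U" "k2 \<in> K" "c + k1 = u + k2" by blast
  have "k2 + - k1 \<in> K" using k assms unfolding is_subgroup_def by blast
  moreover have "c - (k2 + - k1) = u"
  proof -
    have "c - (k2 + - k1) = (c + k1) + - k2" by (simp add: minus_add add.assoc diff_conv_add_uminus del: add_uminus_conv_diff)
    also have "\<dots> = u" using k(4) by (simp add: add.assoc)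
    finally show ?thesis .
  qed
  ultimately show "\<exists>k\<in>K. c - k \<in> U" using k(2) by metis
next
  assume "\<exists>k\<in>K. c - k \<in> U"
  then obtain k where k: "k \<in> K" "c - k \<in> U" by blast
  have "0 \<in> K" using assms unfolding is_subgroup_def by blast
  moreover have "c + 0 = (c - k) + k" by simp
  ultimately show "(\<lambda>h. c + h) ` K \<inter> {u + h | u h. u \<in> U \<and> h \<in> K} \<noteq> {}" using k by blast
qed

lemma Q2_iff:
  assumes "is_subgroup (K::'g::group_add set)"
  shows "((\<lambda>h. c + h) ` K \<inter> {x + h | x h. x \<in> C \<and> h \<in> K} = {}) \<longleftrightarrow> (\<forall>x\<in>C. - x + c \<notin> K)"
proof
  assume e: "(\<lambda>h. c + h) ` K \<inter> {x + h | x h. x \<in> C \<and> h \<in> K} = {}"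
  show "\<forall>x\<in>C. - x + c \<notin> K"
  proof (intro ballI notI)
    fix x assume x: "x \<in> C" "- x + c \<in> K"
    have "0 \<in> K" using assms unfolding is_subgroup_def by blast
    moreover have "c + 0 = x + (- x + c)" by (simp add: add.assoc[symmetric])
    ultimately show False using e x by blast
  qed
next
  assume a: "\<forall>x\<in>C. - x + c \<notin> K"
  show "(\<lambda>h. c + h) ` K \<inter> {x + h | x h. x \<in> C \<and> h \<in> K} = {}"
  proof (rule ccontr)
    assume "(\<lambda>h. c + h) ` K \<inter> {x + h | x h. x \<in> C \<and> h \<in> K} \<noteq> {}"
    then obtain k1 x k2 where k: "k1 \<in> K" "x \<in> C" "k2 \<in> K" "c + k1 = x + k2" by blast
    have "k2 + - k1 \<in> K" using k assms unfolding is_subgroup_def by blast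
    moreover have "- x + c = k2 + - k1"
    proof -
      have "- x + c = - x + (c + k1) + - k1" by (simp only: add.assoc add.right_inverse add_0_right)
      also have "\<dots> = k2 + - k1" using k(4) by (simp add: add.assoc[symmetric])
      finally show ?thesis .
    qed
    ultimately show False using a k(2) by metis
  qed
qed

lemma cont_transl_pow: "continuous_on UNIV (((\<lambda>x. b + x)::'x::topological_group_add \<Rightarrow> 'x) ^^ k)"
proof (induction k)
  case 0
  then show ?case by (simp add: continuous_on_id)
next
  case (Suc k)
  have "((\<lambda>x. b + x) ^^ Suc k) = (\<lambda>y. b + ((\<lambda>x. b + x) ^^ k) y)" by auto
  then show ?case using Suc by (simp add: continuous_on_add continuous_on_const)
qed

lemma cont_cocycle:
  fixes T :: "'x::topological_group_add \<Rightarrow> 'x" and f :: "'x \<Rightarrow> 'g::topological_group_add"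
  assumes "is_rotation T" "continuous_on UNIV f"
  shows "continuous_on UNIV (cocycle f T n)"
proof -
  obtain a where a: "\<And>x. T x = a + x" using assms(1) unfolding is_rotation_def by blast
  have Teq: "T = (\<lambda>x. a + x)" using a by auto
  have invT: "inv T = (\<lambda>x. - a + x)"
  proof
    fix y
    have "inj T" unfolding Teq by (simp add: inj_def)
    moreover have "T (- a + y) = y" using a by (simp add: add.assoc[symmetric])
    ultimately show "inv T y = - a + y" by (rule inv_f_eq)
  qed
  have cn: "continuous_on UNIV (cocycle_nat f T m)" for m
  proof (induction m)
    case 0
    then show ?case by (simp add: continuous_on_const)
  next
    case (Suc m)
    have "continuous_on UNIV (\<lambda>x. f ((T ^^ m) x))"
      using continuous_on_compose2[OF assms(2) cont_transl_pow[where b=a and k=m]] Teq by auto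
    then show ?case using Suc by (simp add: continuous_on_add)
  qed
  show ?thesis
  proof (cases "0 \<le> n")
    case True
    then show ?thesis unfolding cocycle_def using cn by simp
  next
    case False
    have tp: "Tpow T n = ((\<lambda>x. - a + x) ^^ nat (- n))" using False unfolding Tpow_def invT by simp
    have "continuous_on UNIV (\<lambda>x. cocycle_nat f T (nat (- n)) (Tpow T n x))"
      unfolding tp using continuous_on_compose2[OF cn cont_transl_pow[where b="- a" and k="nat (- n)"]] by auto
    then have "continuous_on UNIV (\<lambda>x. - cocycle_nat f T (nat (- n)) (Tpow T n x))"
      by (rule continuous_on_minus)
    then show ?thesis unfolding cocycle_def using False by simp
  qed
qed

theorem lemma4p2:
  fixes T :: "'x::{topological_group_add, metric_space} \<Rightarrow> 'x"
    and f :: "'x \<Rightarrow> 'g::{topological_group_add, t2_space, second_countable_topology}"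
    and H :: "'g set" and Hs :: "'x \<Rightarrow> 'g set" and U C :: "'g set"
  assumes "compact (UNIV :: 'x set)"
    and "locally connected (UNIV :: 'x set)"
    and "is_rotation T" and "minimal_map T"
    and "locally_compact_space (euclidean :: 'g topology)"
    and "continuous_on UNIV f"
    and "is_subgroup H" and "closed H"
    and "consistent_selection f T H Hs"
    and "open U" and "compact C"
  shows "\<forall>n::int.
     open {y. ((\<lambda>h. cocycle f T n y + h) ` Hs y) \<inter> {u + h | u h. u \<in> U \<and> h \<in> Hs y} \<noteq> {}} \<and>
     open {y. ((\<lambda>h. cocycle f T n y + h) ` Hs y) \<inter> {c + h | c h. c \<in> C \<and> h \<in> Hs y} = {}}"
proof (intro allI conjI)
  fix n :: int
  have hc: "\<forall>y. Hs y \<in> conjugates H" and hs: "\<forall>S. conj_open H S \<longrightarrow> open {y. Hs y \<in> S}"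
    using assms(9) unfolding consistent_selection_def by blast+
  have c: "continuous_on UNIV (cocycle f T n)" using cont_cocycle assms(3,6) by blast
  have sub: "is_subgroup (conj_set g H)" for g using conj_subgroup assms(7) by blast
  define Q1 where "Q1 = (\<lambda>a K. (\<lambda>h. a + h) ` K \<inter> {u + h | u h. u \<in> U \<and> h \<in> K} \<noteq> {})"
  define P1 where "P1 = (\<Union>h\<in>H. (\<lambda>p. fst p - (snd p + h - snd p)) -` U)"
  have oP1: "open P1" unfolding P1_def
  proof (rule open_UN, rule ballI)
    fix h
    have "continuous_on UNIV (\<lambda>p::'g \<times> 'g. fst p - (snd p + h - snd p))"
      by (intro continuous_intros)
    then show "open ((\<lambda>p::'g \<times> 'g. fst p - (snd p + h - snd p)) -` U)"
      using continuous_on_open_vimage[of UNIV] assms(10) by auto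
  qed
  have PQ1: "(a, g) \<in> P1 \<longleftrightarrow> Q1 a (conj_set g H)" for a g
  proof -
    have "Q1 a (conj_set g H) \<longleftrightarrow> (\<exists>k\<in>conj_set g H. a - k \<in> U)"
      unfolding Q1_def by (rule Q1_iff[OF sub])
    also have "\<dots> \<longleftrightarrow> (\<exists>h\<in>H. a - (g + h - g) \<in> U)" unfolding conj_set_def by auto
    finally show ?thesis unfolding P1_def by auto
  qed
  have "open {y. Q1 (cocycle f T n y) (Hs y)}"
    by (rule main_open[OF c hc hs oP1 PQ1])
  then show "open {y. ((\<lambda>h. cocycle f T n y + h) ` Hs y) \<inter> {u + h | u h. u \<in> U \<and> h \<in> Hs y} \<noteq> {}}"
    unfolding Q1_def by simp
next
  fix n :: int
  have hc: "\<forall>y. Hs y \<in> conjugates H" and hs: "\<forall>S. conj_open H S \<longrightarrow> open {y. Hs y \<in> S}"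
    using assms(9) unfolding consistent_selection_def by blast+
  have c: "continuous_on UNIV (cocycle f T n)" using cont_cocycle assms(3,6) by blast
  have sub: "is_subgroup (conj_set g H)" for g using conj_subgroup assms(7) by blast
  define Q2 where "Q2 = (\<lambda>a K. (\<lambda>h. a + h) ` K \<inter> {c + h | c h. c \<in> C \<and> h \<in> K} = {})"
  define P2 where "P2 = {p::'g \<times> 'g. \<forall>x\<in>C. - snd p + (- x + fst p) + snd p \<notin> H}"
  have oP2: "open P2"
  proof (subst open_subopen, intro ballI)
    fix p0 assume p0: "p0 \<in> P2"
    define W where "W = (\<lambda>q::('g \<times> 'g) \<times> 'g. - snd (fst q) + (- snd q + fst (fst q)) + snd (fst q)) -` (- H)"
    have "continuous_on UNIV (\<lambda>q::('g \<times> 'g) \<times> 'g. - snd (fst q) + (- snd q + fst (fst q)) + snd (fst q))"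
      by (intro continuous_intros)
    moreover have "open (- H)" using assms(8) by (simp add: open_Compl)
    ultimately have oW: "open W" unfolding W_def using continuous_on_open_vimage[of UNIV] by auto
    have "{p0} \<times> C \<subseteq> W" using p0 unfolding W_def P2_def by auto
    from Elementary_Topology.tube_lemma[OF assms(11) oW this] obtain X0 where X0: "p0 \<in> X0" "open X0" "X0 \<times> C \<subseteq> W"
      by blast
    have "X0 \<subseteq> P2" using X0(3) unfolding W_def P2_def by auto
    then show "\<exists>T. open T \<and> p0 \<in> T \<and> T \<subseteq> P2" using X0 by blast
  qed
  have PQ2: "(a, g) \<in> P2 \<longleftrightarrow> Q2 a (conj_set g H)" for a g
  proof -
    have "Q2 a (conj_set g H) \<longleftrightarrow> (\<forall>x\<in>C. - x + a \<notin> conj_set g H)"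
      unfolding Q2_def by (rule Q2_iff[OF sub])
    also have "\<dots> \<longleftrightarrow> (\<forall>x\<in>C. - g + (- x + a) + g \<notin> H)" unfolding mem_conj by simp
    finally show ?thesis unfolding P2_def by simp
  qed
  have "open {y. Q2 (cocycle f T n y) (Hs y)}"
    by (rule main_open[OF c hc hs oP2 PQ2])
  then show "open {y. ((\<lambda>h. cocycle f T n y + h) ` Hs y) \<inter> {c + h | c h. c \<in> C \<and> h \<in> Hs y} = {}}"
    unfolding Q2_def by simp
qed

end
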